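(* For all $g,g'\in G$: (i) $\langle go,g\omega_-\rangle=H(gr)=-\langle g^{-1}o,\omega_-\rangle$; (ii) $H(g'g)=H(g)+\langle g'o,g'g\omega_+\rangle$; (iii) $H(g'gr)=H(gr)+\langle g'o,g'g\omega_-\rangle$.
   Context: Let $q\ge2$ and $\mathfrak G$ the $(q+1)$-regular tree with vertex set $\mathfrak X$ and graph distance $d$; $\Omega$ is its boundary (infinite non-backtracking edge chains modulo eventual equality up to shift), $[x,\omega)$ the geodesic ray from $x$ to $\omega$. Fix a vertex $o$ and $\omega_-\neq\omega_+\in\Omega$ such that $o$ lies on the geodesic $]\omega_-,\omega_+[$. Horocycle bracket: $\langle x,\omega\rangle=d(o,y)-d(x,y)$ where $[o,\omega)\cap[x,\omega)=[y,\omega)$. $G=\mathrm{Aut}(\mathfrak G)$, $K=\mathrm{Stab}_G(o)$, $B_{\omega_+}=\{g\in G:g\omega_+=\omega_+,\ g\text{ fixes some vertex}\}$, and $\tau\in G$ a fixed automorphism with $\tau\omega_\pm=\omega_\pm$ translating $]\omega_-,\omega_+[$ by one step towards $\omega_+$. Every $g\in G$ can be written $g=kn\tau^j$ with $k\in K$, $n\in B_{\omega_+}$, and $j=:H(g)\in\mathbb Z$ unique. $r\in K$ is a fixed element with $r^2=\mathrm{id}$ and $r\tau^jr^{-1}=\tau^{-j}$ for all $j\in\mathbb Z$. *)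

theory Defs
  imports Main
begin

definition walk :: "('v \<Rightarrow> 'v \<Rightarrow> bool) \<Rightarrow> (nat \<Rightarrow> 'v) \<Rightarrow> nat \<Rightarrow> bool" where
  "walk E p n \<longleftrightarrow> (\<forall>i<n. E (p i) (p (Suc i)))"

definition gdist :: "('v \<Rightarrow> 'v \<Rightarrow> bool) \<Rightarrow> 'v \<Rightarrow> 'v \<Rightarrow> nat" where
  "gdist E x y = (LEAST n. \<exists>p. p 0 = x \<and> p n = y \<and> walk E p n)"

definition regular_tree :: "('v \<Rightarrow> 'v \<Rightarrow> bool) \<Rightarrow> nat \<Rightarrow> bool" where
  "regular_tree E q \<longleftrightarrow>
     (\<forall>x y. E x y \<longrightarrow> E y x) \<and> (\<forall>x. \<not> E x x) \<and>
     (\<forall>x y. \<exists>p n. p 0 = x \<and> p n = y \<and> walk E p n) \<and>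
     (\<forall>p n. \<not> (n \<ge> 3 \<and> walk E p n \<and> p n = p 0 \<and> inj_on p {..<n})) \<and>
     (\<forall>x. finite {y. E x y} \<and> card {y. E x y} = q + 1)"

definition ray :: "('v \<Rightarrow> 'v \<Rightarrow> bool) \<Rightarrow> (nat \<Rightarrow> 'v) \<Rightarrow> bool" where
  "ray E \<gamma> \<longleftrightarrow> (\<forall>n. E (\<gamma> n) (\<gamma> (Suc n)) \<and> \<gamma> n \<noteq> \<gamma> (Suc (Suc n)))"

definition ray_equiv :: "(nat \<Rightarrow> 'v) \<Rightarrow> (nat \<Rightarrow> 'v) \<Rightarrow> bool" where
  "ray_equiv \<gamma> \<delta> \<longleftrightarrow> (\<exists>k m. \<forall>n. \<gamma> (n + k) = \<delta> (n + m))"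

definition boundary :: "('v \<Rightarrow> 'v \<Rightarrow> bool) \<Rightarrow> (nat \<Rightarrow> 'v) set set" where
  "boundary E = {{\<delta>. ray E \<delta> \<and> ray_equiv \<gamma> \<delta>} | \<gamma>. ray E \<gamma>}"

definition geo_ray :: "'v \<Rightarrow> (nat \<Rightarrow> 'v) set \<Rightarrow> (nat \<Rightarrow> 'v)" where
  "geo_ray x \<omega> = (THE \<gamma>. \<gamma> \<in> \<omega> \<and> \<gamma> 0 = x)"

definition horo :: "('v \<Rightarrow> 'v \<Rightarrow> bool) \<Rightarrow> 'v \<Rightarrow> 'v \<Rightarrow> (nat \<Rightarrow> 'v) set \<Rightarrow> int" where
  "horo E v0 x \<omega> =
     (let y = (THE y. range (geo_ray v0 \<omega>) \<inter> range (geo_ray x \<omega>) = range (geo_ray y \<omega>))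
      in int (gdist E v0 y) - int (gdist E x y))"

definition aut :: "('v \<Rightarrow> 'v \<Rightarrow> bool) \<Rightarrow> ('v \<Rightarrow> 'v) set" where
  "aut E = {g. bij g \<and> (\<forall>x y. E x y \<longleftrightarrow> E (g x) (g y))}"

definition bd_act :: "('v \<Rightarrow> 'v) \<Rightarrow> (nat \<Rightarrow> 'v) set \<Rightarrow> (nat \<Rightarrow> 'v) set" where
  "bd_act g \<omega> = (\<lambda>\<gamma>. g \<circ> \<gamma>) ` \<omega>"

definition stab :: "('v \<Rightarrow> 'v \<Rightarrow> bool) \<Rightarrow> 'v \<Rightarrow> ('v \<Rightarrow> 'v) set" where
  "stab E v0 = {k \<in> aut E. k v0 = v0}"

definition horo_stab :: "('v \<Rightarrow> 'v \<Rightarrow> bool) \<Rightarrow> (nat \<Rightarrow> 'v) set \<Rightarrow> ('v \<Rightarrow> 'v) set" where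
  "horo_stab E \<omega> = {g \<in> aut E. bd_act g \<omega> = \<omega> \<and> (\<exists>x. g x = x)}"

definition zpow :: "('v \<Rightarrow> 'v) \<Rightarrow> int \<Rightarrow> ('v \<Rightarrow> 'v)" where
  "zpow f j = (if 0 \<le> j then f ^^ nat j else (inv f) ^^ nat (- j))"

definition Hfun :: "('v \<Rightarrow> 'v \<Rightarrow> bool) \<Rightarrow> 'v \<Rightarrow> (nat \<Rightarrow> 'v) set \<Rightarrow> ('v \<Rightarrow> 'v) \<Rightarrow> ('v \<Rightarrow> 'v) \<Rightarrow> int" where
  "Hfun E v0 \<omega>p \<tau> g = (THE j. \<exists>k n. k \<in> stab E v0 \<and> n \<in> horo_stab E \<omega>p \<and> g = k \<circ> n \<circ> zpow \<tau> j)"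

definition line :: "('v \<Rightarrow> 'v \<Rightarrow> bool) \<Rightarrow> (int \<Rightarrow> 'v) \<Rightarrow> bool" where
  "line E L \<longleftrightarrow> (\<forall>i. E (L i) (L (i + 1)) \<and> L i \<noteq> L (i + 2))"

end

theory Submission
  imports Defs
begin


locale T =
  fixes E :: "'v \<Rightarrow> 'v \<Rightarrow> bool" and q :: nat
  assumes RT: "regular_tree E q"
begin

abbreviation d where "d \<equiv> gdist E"

lemma symE: "E x y \<Longrightarrow> E y x" using RT unfolding regular_tree_def by blast
lemma irr: "\<not> E x x" using RT unfolding regular_tree_def by blast
lemma conn: "\<exists>p n. p 0 = x \<and> p n = y \<and> walk E p n" using RT unfolding regular_tree_def by blast
lemma nocyc: "n \<ge> 3 \<Longrightarrow> walk E p n \<Longrightarrow> p n = p 0 \<Longrightarrow> inj_on p {..<n} \<Longrightarrow> False"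
  using RT unfolding regular_tree_def by blast
lemma deg: "finite {y. E x y}" "card {y. E x y} = q + 1" using RT unfolding regular_tree_def by blast+

lemma d_walk: "\<exists>p. p 0 = x \<and> p (d x y) = y \<and> walk E p (d x y)"
  unfolding gdist_def by (rule LeastI_ex) (use conn in blast)

lemma d_le: "p 0 = x \<Longrightarrow> p n = y \<Longrightarrow> walk E p n \<Longrightarrow> d x y \<le> n"
  unfolding gdist_def by (rule Least_le) blast

lemma walk_mono: "walk E p n \<Longrightarrow> m \<le> n \<Longrightarrow> walk E p m"
  unfolding walk_def by auto

lemma d_refl[simp]: "d x x = 0"
proof -
  have "d x x \<le> 0" by (rule d_le[of "\<lambda>_. x"]) (auto simp: walk_def)
  thus ?thesis by simp
qed

lemma d_zero: "d x y = 0 \<Longrightarrow> x = y"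
  using d_walk[of x y] by auto

lemma d_edge: "E x y \<Longrightarrow> d x y = 1"
proof -
  assume e: "E x y"
  have "d x y \<le> 1" by (rule d_le[of "\<lambda>i. if i = 0 then x else y"]) (auto simp: walk_def e)
  moreover have "d x y \<noteq> 0" using e irr d_zero by blast
  ultimately show ?thesis by simp
qed

lemma walk_rev: "walk E p n \<Longrightarrow> walk E (\<lambda>i. p (n - i)) n"
  unfolding walk_def
proof (intro allI impI)
  fix i assume w: "\<forall>i<n. E (p i) (p (Suc i))" and i: "i < n"
  have "E (p (n - Suc i)) (p (Suc (n - Suc i)))" using w i by auto
  moreover have "Suc (n - Suc i) = n - i" using i by simp
  ultimately show "E (p (n - i)) (p (n - Suc i))" by (metis symE)
qed

lemma d_sym: "d x y = d y x"
proof -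
  have *: "d y x \<le> d x y" for x y
  proof -
    obtain p where p: "p 0 = x" "p (d x y) = y" "walk E p (d x y)" using d_walk by blast
    have w: "walk E (\<lambda>i. p (d x y - i)) (d x y)" by (rule walk_rev[OF p(3)])
    show ?thesis using d_le[of "\<lambda>i. p (d x y - i)" y "d x y" x, OF _ _ w] p by simp
  qed
  show ?thesis using *[of x y] *[of y x] by simp
qed

lemma d_tri: "d x z \<le> d x y + d y z"
proof -
  obtain p where p: "p 0 = x" "p (d x y) = y" "walk E p (d x y)" using d_walk by blast
  obtain p2 where p2: "p2 0 = y" "p2 (d y z) = z" "walk E p2 (d y z)" using d_walk by blast
  let ?m = "d x y"
  let ?c = "\<lambda>i. if i \<le> ?m then p i else p2 (i - ?m)"
  have "walk E ?c (?m + d y z)"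
    unfolding walk_def
  proof (intro allI impI)
    fix i assume i: "i < ?m + d y z"
    show "E (?c i) (?c (Suc i))"
    proof (cases "i < ?m")
      case True then show ?thesis using p(3) by (auto simp: walk_def)
    next
      case False
      hence "Suc i - ?m = Suc (i - ?m)" by simp
      then show ?thesis using False p2 p(2) i by (auto simp: walk_def)
    qed
  qed
  moreover have "?c 0 = x" using p by simp
  moreover have "?c (?m + d y z) = z" using p p2 by auto
  ultimately show ?thesis using d_le[of ?c x "?m + d y z" z] by blast
qed

lemma d_shift: "walk E p n \<Longrightarrow> t \<le> n \<Longrightarrow> d (p t) (p n) \<le> n - t"
  by (rule d_le[of "\<lambda>i. p (i + t)"]) (auto simp: walk_def)

lemma d_prefix: "walk E p n \<Longrightarrow> t \<le> n \<Longrightarrow> d (p 0) (p t) \<le> t"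
  by (rule d_le[of p]) (auto simp: walk_def)

lemma geod: "p 0 = x \<Longrightarrow> p (d x y) = y \<Longrightarrow> walk E p (d x y) \<Longrightarrow> t \<le> d x y \<Longrightarrow> d x (p t) = t"
proof -
  assume p: "p 0 = x" "p (d x y) = y" "walk E p (d x y)" and t: "t \<le> d x y"
  have a: "d x (p t) \<le> t" using d_prefix[OF p(3) t] p by simp
  have b: "d (p t) y \<le> d x y - t" using d_shift[OF p(3) t] p by simp
  have "d x y \<le> d x (p t) + d (p t) y" by (rule d_tri)
  thus ?thesis using a b t by linarith
qed

lemma d_edge_diff: "E x y \<Longrightarrow> d b y \<le> d b x + 1"
proof -
  assume e: "E x y"
  show ?thesis using d_tri[of b y x] d_edge[OF e] by simp
qed

end

context T begin

lemma cyc: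
  assumes wa: "walk E \<alpha> m" "\<alpha> 0 = b" "\<forall>t\<le>m. d b (\<alpha> t) = t"
  and wb: "walk E \<beta> m" "\<beta> 0 = b" "\<forall>t\<le>m. d b (\<beta> t) = t"
  and ne: "\<alpha> m \<noteq> \<beta> m"
  and ww: "walk E w l" "w 0 = \<alpha> m" "w l = \<beta> m" "l \<ge> 1" "inj_on w {..l}"
     "\<forall>j. 0 < j \<and> j < l \<longrightarrow> m < d b (w j)"
  shows False
proof -
  define S where "S = {t. t \<le> m \<and> \<alpha> t = \<beta> t}"
  have finS: "finite S" unfolding S_def by simp
  have S0: "0 \<in> S" unfolding S_def using wa wb by simp
  define i where "i = Max S"
  have iS: "i \<in> S" unfolding i_def using finS S0 Max_in by blast
  have imax: "\<And>t. t \<in> S \<Longrightarrow> t \<le> i" unfolding i_def using finS by simp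
  have i1: "i \<le> m" "\<alpha> i = \<beta> i" using iS unfolding S_def by auto
  have i2: "\<And>t. i < t \<Longrightarrow> t \<le> m \<Longrightarrow> \<alpha> t \<noteq> \<beta> t" using imax unfolding S_def by force
  have im: "i < m" using i1 ne by (metis le_less)
  define k where "k = m - i"
  define N where "N = 2 * k + l"
  define c where "c = (\<lambda>j. if j \<le> k then \<alpha> (i + j) else if j \<le> k + l then w (j - k) else \<beta> (i + (N - j)))"
  have k1: "k \<ge> 1" "i + k = m" using im unfolding k_def by auto
  have cA: "\<And>j. j \<le> k \<Longrightarrow> c j = \<alpha> (i + j)" unfolding c_def by simp
  have cW: "\<And>j. k \<le> j \<Longrightarrow> j \<le> k + l \<Longrightarrow> c j = w (j - k)"
    unfolding c_def using ww(2) k1 by auto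
  have cB: "\<And>j. k + l \<le> j \<Longrightarrow> j \<le> N \<Longrightarrow> c j = \<beta> (i + (N - j))"
  proof -
    fix j assume j: "k + l \<le> j" "j \<le> N"
    show "c j = \<beta> (i + (N - j))"
    proof (cases "j = k + l")
      case True
      then show ?thesis unfolding c_def using ww(3) k1 ww(4) N_def by auto
    next
      case False then show ?thesis unfolding c_def using j k1 by auto
    qed
  qed
  have walkc: "walk E c N"
    unfolding walk_def
  proof (intro allI impI)
    fix j assume j: "j < N"
    consider "j < k" | "k \<le> j \<and> j < k + l" | "k + l \<le> j" by linarith
    then show "E (c j) (c (Suc j))"
    proof cases
      case 1
      then show ?thesis using cA[of j] cA[of "Suc j"] wa(1) k1 unfolding walk_def by auto
    next
      case 2
      then have "E (w (j - k)) (w (Suc (j - k)))" using ww(1) unfolding walk_def by auto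
      moreover have "Suc (j - k) = Suc j - k" using 2 by (simp add: Suc_diff_le)
      ultimately show ?thesis using cW[of j] cW[of "Suc j"] 2 by auto
    next
      case 3
      have "E (\<beta> (i + (N - Suc j))) (\<beta> (Suc (i + (N - Suc j))))"
        using wb(1) j 3 unfolding walk_def N_def k_def by auto
      moreover have "Suc (i + (N - Suc j)) = i + (N - j)" using j by simp
      ultimately show ?thesis using cB[of j] cB[of "Suc j"] 3 j by (auto intro: symE)
    qed
  qed
  have cN: "c N = c 0" using cB[of N] cA[of 0] i1 N_def by simp
  have dA: "\<And>j. j \<le> k \<Longrightarrow> d b (c j) = i + j" using cA wa(3) k1 by simp
  have dB: "\<And>j. k + l \<le> j \<Longrightarrow> j \<le> N \<Longrightarrow> d b (c j) = i + (N - j)"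
    using cB wb(3) k1 N_def by simp
  have dW: "\<And>j. k < j \<Longrightarrow> j < k + l \<Longrightarrow> m < d b (c j)"
    using cW ww(6) by simp
  have inj1: "j1 = j2" if j: "j1 < N" "j2 < N" "j1 \<le> j2" "c j1 = c j2" for j1 j2
  proof -
    have dd: "d b (c j1) = d b (c j2)" using j(4) by simp
    consider "j1 \<le> k" | "k < j1 \<and> j1 < k + l" | "k + l \<le> j1" by linarith
    then show ?thesis
    proof cases
      case A1: 1
      consider "j2 \<le> k" | "k < j2 \<and> j2 < k + l" | "k + l \<le> j2" by linarith
      then show ?thesis
      proof cases
        case 1
        have "d b (c j1) = i + j1" "d b (c j2) = i + j2" using dA A1 1 by auto
        then show ?thesis using dd by linarith
      next
        case 2
        have "d b (c j1) = i + j1" "m < d b (c j2)" using dA A1 dW 2 by auto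
        then show ?thesis using dd A1 k1 by simp
      next
        case 3
        have "d b (c j1) = i + j1" "d b (c j2) = i + (N - j2)" using dA A1 dB 3 j(2) by auto
        hence e: "i + j1 = i + (N - j2)" using dd by simp
        show ?thesis
        proof (cases "j1 = 0")
          case True then show ?thesis using e j by simp
        next
          case False
          have "c j1 = \<alpha> (i + j1)" "c j2 = \<beta> (i + (N - j2))" using cA A1 cB 3 j(2) by auto
          hence "\<alpha> (i + j1) = \<beta> (i + j1)" using e j(4) by simp
          moreover have "i + j1 \<le> m" using A1 k1 by simp
          ultimately show ?thesis using i2[of "i + j1"] False by simp
        qed
      qed
    next
      case W1: 2
      consider "k < j2 \<and> j2 < k + l" | "k + l \<le> j2" using j W1 by linarith
      then show ?thesis
      proof cases
        case 1
        have "c j1 = w (j1 - k)" "c j2 = w (j2 - k)" using cW W1 1 by auto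
        hence "w (j1 - k) = w (j2 - k)" using j(4) by simp
        hence "j1 - k = j2 - k" using ww(5) 1 W1 unfolding inj_on_def by auto
        then show ?thesis using 1 W1 by arith
      next
        case 2
        have "m < d b (c j1)" "d b (c j2) = i + (N - j2)" using dW W1 dB 2 j(2) by auto
        then show ?thesis using dd 2 k1 N_def by simp
      qed
    next
      case 3
      have "k + l \<le> j2" "j1 \<le> N" "j2 \<le> N" using 3 j by auto
      hence "d b (c j1) = i + (N - j1)" "d b (c j2) = i + (N - j2)" using dB[of j1] dB[of j2] 3 by auto
      then show ?thesis using dd j by linarith
    qed
  qed
  have injc: "inj_on c {..<N}"
    unfolding inj_on_def
  proof (intro ballI impI)
    fix j1 j2 assume "j1 \<in> {..<N}" "j2 \<in> {..<N}" "c j1 = c j2"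
    then show "j1 = j2" using inj1[of j1 j2] inj1[of j2 j1] by (cases "j1 \<le> j2") auto
  qed
  have "N \<ge> 3" using k1 ww(4) N_def by simp
  then show False using nocyc[OF _ walkc cN injc] by simp
qed

end

context T begin

lemma geo_ex: "\<exists>p. p 0 = x \<and> p (d x y) = y \<and> walk E p (d x y) \<and> (\<forall>t\<le>d x y. d x (p t) = t)"
  using d_walk[of x y] geod by blast

lemma P1: "E x y \<Longrightarrow> d b x \<noteq> d b y"
proof
  assume e: "E x y" and eq: "d b x = d b y"
  obtain \<alpha> where a: "\<alpha> 0 = b" "\<alpha> (d b x) = x" "walk E \<alpha> (d b x)" "\<forall>t\<le>d b x. d b (\<alpha> t) = t"
    using geo_ex by blast
  obtain \<beta> where c: "\<beta> 0 = b" "\<beta> (d b y) = y" "walk E \<beta> (d b y)" "\<forall>t\<le>d b y. d b (\<beta> t) = t"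
    using geo_ex by blast
  have ne: "x \<noteq> y" using e irr by blast
  show False
    apply (rule cyc[of \<alpha> "d b x" b \<beta> "\<lambda>j. if j = 0 then x else y" 1])
    using a c eq ne e by (auto simp: walk_def inj_on_def)
qed

lemma P2: "E x y \<Longrightarrow> E x y' \<Longrightarrow> d b y < d b x \<Longrightarrow> d b y' < d b x \<Longrightarrow> y = y'"
proof (rule ccontr)
  assume e: "E x y" "E x y'" and l: "d b y < d b x" "d b y' < d b x" and ne: "y \<noteq> y'"
  have "d b x \<le> d b y + 1" "d b x \<le> d b y' + 1" using d_edge_diff[OF symE[OF e(1)]] d_edge_diff[OF symE[OF e(2)]] by auto
  hence eq: "d b y = d b y'" "d b x = d b y + 1" using l by auto
  obtain \<alpha> where a: "\<alpha> 0 = b" "\<alpha> (d b y) = y" "walk E \<alpha> (d b y)" "\<forall>t\<le>d b y. d b (\<alpha> t) = t"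
    using geo_ex by blast
  obtain \<beta> where c: "\<beta> 0 = b" "\<beta> (d b y') = y'" "walk E \<beta> (d b y')" "\<forall>t\<le>d b y'. d b (\<beta> t) = t"
    using geo_ex by blast
  have ne2: "x \<noteq> y" "x \<noteq> y'" using e irr by blast+
  have w: "walk E (\<lambda>j::nat. if j = 0 then y else if j = 1 then x else y') 2"
    unfolding walk_def using e symE by (auto simp: less_Suc_eq numeral_2_eq_2)
  have inj: "inj_on (\<lambda>j::nat. if j = 0 then y else if j = 1 then x else y') {..2}"
    unfolding inj_on_def using ne ne2 by (auto simp: le_Suc_eq numeral_2_eq_2)
  show False
    apply (rule cyc[of \<alpha> "d b y" b \<beta> "\<lambda>j. if j = 0 then y else if j = 1 then x else y'" 2])
    using a c eq ne w inj by (auto simp: less_Suc_eq numeral_2_eq_2)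
qed

definition par where "par b x = (SOME y. E x y \<and> d b y < d b x)"

lemma par_ex: "x \<noteq> b \<Longrightarrow> \<exists>y. E x y \<and> d b y < d b x"
proof -
  assume xb: "x \<noteq> b"
  obtain \<alpha> where a: "\<alpha> 0 = b" "\<alpha> (d b x) = x" "walk E \<alpha> (d b x)" "\<forall>t\<le>d b x. d b (\<alpha> t) = t"
    using geo_ex by blast
  have n: "d b x \<ge> 1" using xb d_zero by (metis less_one not_le)
  have "d b x - 1 < d b x" using n by simp
  hence "E (\<alpha> (d b x - 1)) (\<alpha> (Suc (d b x - 1)))" using a(3) unfolding walk_def by blast
  moreover have "Suc (d b x - 1) = d b x" using n by simp
  ultimately have "E x (\<alpha> (d b x - 1))" using a(2) symE by simp
  moreover have "d b (\<alpha> (d b x - 1)) < d b x" using a(4) n by simp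
  ultimately show ?thesis by blast
qed

lemma par: "x \<noteq> b \<Longrightarrow> E x (par b x) \<and> d b (par b x) + 1 = d b x"
proof -
  assume xb: "x \<noteq> b"
  have *: "E x (par b x) \<and> d b (par b x) < d b x"
    unfolding par_def by (rule someI_ex) (rule par_ex[OF xb])
  moreover have "d b x \<le> d b (par b x) + 1" using d_edge_diff[OF symE] * by blast
  ultimately show ?thesis by simp
qed

lemma par_uniq: "E x y \<Longrightarrow> d b y < d b x \<Longrightarrow> par b x = y"
proof -
  assume e: "E x y" and l: "d b y < d b x"
  have xb: "x \<noteq> b" using l by auto
  show ?thesis using par[OF xb] P2[OF _ e _ l, of "par b x"] by simp
qed

lemma nbr: "E x y \<Longrightarrow> d b y = d b x + 1 \<or> d b x = d b y + 1"
  using P1[of x y b] d_edge_diff[of x y b] d_edge_diff[OF symE, of x y b] by auto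

lemma edge_par: "E x y \<longleftrightarrow> (x \<noteq> b \<and> y = par b x) \<or> (y \<noteq> b \<and> x = par b y)"
proof
  assume e: "E x y"
  show "(x \<noteq> b \<and> y = par b x) \<or> (y \<noteq> b \<and> x = par b y)"
  proof (cases "d b y < d b x")
    case True
    then show ?thesis using par_uniq[OF e True] by auto
  next
    case False
    then have "d b x < d b y" using nbr[OF e, of b] by auto
    then show ?thesis using par_uniq[OF symE[OF e]] by auto
  qed
next
  assume "(x \<noteq> b \<and> y = par b x) \<or> (y \<noteq> b \<and> x = par b y)"
  then show "E x y" using par symE by blast
qed

lemma nb_geo:
  assumes w: "walk E p n" and nb: "\<forall>i. i + 2 \<le> n \<longrightarrow> p i \<noteq> p (i + 2)"
  shows "t \<le> n \<Longrightarrow> d (p 0) (p t) = t"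
proof (induction t rule: nat_less_induct)
  case (1 t)
  show ?case
  proof (cases t)
    case 0 then show ?thesis by simp
  next
    case (Suc s)
    show ?thesis
    proof (cases s)
      case 0
      then show ?thesis using Suc w 1 d_edge unfolding walk_def by auto
    next
      case (Suc u)
      have t: "t = u + 2" using Suc \<open>t = Suc s\<close> by simp
      have h1: "d (p 0) (p (u + 1)) = u + 1" using 1 t by auto
      have h0: "d (p 0) (p u) = u" using 1 t by auto
      have e1: "E (p (u + 1)) (p (u + 2))" using w 1(2) t unfolding walk_def by auto
      have e0: "E (p (u + 1)) (p u)" using w 1(2) t symE unfolding walk_def by auto
      have pu: "par (p 0) (p (u + 1)) = p u" using par_uniq[OF e0] h0 h1 by simp
      show ?thesis
      proof (rule ccontr)
        assume "d (p 0) (p t) \<noteq> t"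
        hence "d (p 0) (p (u + 2)) = u" using nbr[OF e1, of "p 0"] h1 t by auto
        hence "par (p 0) (p (u + 1)) = p (u + 2)" using par_uniq[OF e1] h1 by simp
        thus False using pu nb 1(2) t by auto
      qed
    qed
  qed
qed

lemma geo_uniq:
  assumes "walk E p n" "walk E p' n" "\<forall>t\<le>n. d x (p t) = t" "\<forall>t\<le>n. d x (p' t) = t" "p n = p' n"
  shows "t \<le> n \<Longrightarrow> p t = p' t"
proof -
  have "\<forall>s. s \<le> n \<longrightarrow> p (n - s) = p' (n - s)" 
  proof
    fix s show "s \<le> n \<longrightarrow> p (n - s) = p' (n - s)"
    proof (induction s)
      case 0 then show ?case using assms by simp
    next
      case (Suc s)
      show ?case
      proof
        assume sn: "Suc s \<le> n"
        define t where "t = n - s"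
        have t1: "t \<ge> 1" "n - Suc s = t - 1" "Suc (t - 1) = t" using sn t_def by auto
        have eq: "p t = p' t" using Suc sn t_def by simp
        have tl: "t - 1 < n" using t1 sn t_def by simp
        have "E (p (t - 1)) (p (Suc (t - 1)))" "E (p' (t - 1)) (p' (Suc (t - 1)))"
          using assms(1,2) tl unfolding walk_def by blast+
        hence e: "E (p t) (p (t - 1))" "E (p' t) (p' (t - 1))" using t1(3) symE by auto
        have "par x (p t) = p (t - 1)" "par x (p' t) = p' (t - 1)"
        proof -
          have tn: "t \<le> n" "t - 1 \<le> n" using t_def by auto
          have "d x (p (t - 1)) = t - 1" "d x (p t) = t" "d x (p' (t - 1)) = t - 1" "d x (p' t) = t"
            using assms(3,4) tn by blast+
          hence "d x (p (t - 1)) < d x (p t)" "d x (p' (t - 1)) < d x (p' t)" using t1 by auto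
          thus "par x (p t) = p (t - 1)" "par x (p' t) = p' (t - 1)"
            using par_uniq[OF e(1)] par_uniq[OF e(2)] by blast+
        qed
        then show "p (n - Suc s) = p' (n - Suc s)" using eq t1 by simp
      qed
    qed
  qed
  moreover assume "t \<le> n"
  ultimately show "p t = p' t" by (metis diff_diff_cancel diff_le_self)
qed

end

context T begin

lemma ray_walk: "ray E \<gamma> \<Longrightarrow> walk E \<gamma> n" unfolding ray_def walk_def by blast

lemma ray_geo: "ray E \<gamma> \<Longrightarrow> d (\<gamma> 0) (\<gamma> n) = n"
  by (rule nb_geo[of \<gamma> n]) (auto simp: ray_walk ray_def)

lemma ray_shift: "ray E \<gamma> \<Longrightarrow> ray E (\<lambda>n. \<gamma> (n + k))"
  unfolding ray_def by simp

lemma re_refl: "ray_equiv \<gamma> \<gamma>" unfolding ray_equiv_def by (rule exI[of _ 0], rule exI[of _ 0]) simp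
lemma re_sym: "ray_equiv \<gamma> \<delta> \<Longrightarrow> ray_equiv \<delta> \<gamma>" unfolding ray_equiv_def by metis
lemma re_trans: "ray_equiv \<gamma> \<delta> \<Longrightarrow> ray_equiv \<delta> \<epsilon> \<Longrightarrow> ray_equiv \<gamma> \<epsilon>"
proof -
  assume "ray_equiv \<gamma> \<delta>" "ray_equiv \<delta> \<epsilon>"
  then obtain k m k' m' where a: "\<forall>n. \<gamma> (n + k) = \<delta> (n + m)" and b: "\<forall>n. \<delta> (n + k') = \<epsilon> (n + m')"
    unfolding ray_equiv_def by blast
  have "\<forall>n. \<gamma> (n + (k + k')) = \<epsilon> (n + (m + m'))"
  proof
    fix n
    have "\<gamma> (n + (k + k')) = \<delta> ((n + k') + m)" using a[rule_format, of "n + k'"] by (simp add: ac_simps)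
    also have "\<dots> = \<epsilon> ((n + m) + m')" using b[rule_format, of "n + m"] by (simp add: ac_simps)
    finally show "\<gamma> (n + (k + k')) = \<epsilon> (n + (m + m'))" by (simp add: ac_simps)
  qed
  thus ?thesis unfolding ray_equiv_def by blast
qed
lemma re_shift: "ray_equiv \<gamma> (\<lambda>n. \<gamma> (n + k))"
  unfolding ray_equiv_def by (rule exI[of _ k], rule exI[of _ 0]) simp

lemma ray_same:
  assumes r: "ray E \<gamma>" "ray E \<delta>" and s: "\<gamma> 0 = \<delta> 0" and e: "ray_equiv \<gamma> \<delta>"
  shows "\<gamma> = \<delta>"
proof -
  obtain k m where km: "\<forall>n. \<gamma> (n + k) = \<delta> (n + m)" using e unfolding ray_equiv_def by blast
  have "d (\<gamma> 0) (\<gamma> k) = k" "d (\<delta> 0) (\<delta> m) = m" using ray_geo r by auto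
  moreover have "\<gamma> k = \<delta> m" using km[rule_format, of 0] by simp
  ultimately have km2: "k = m" using s by simp
  have ends: "\<gamma> k = \<delta> k" using km[rule_format, of 0] km2 by simp
  have g1: "\<forall>t\<le>k. d (\<gamma> 0) (\<gamma> t) = t" using ray_geo[OF r(1)] by simp
  have g2: "\<forall>t\<le>k. d (\<gamma> 0) (\<delta> t) = t" using ray_geo[OF r(2)] s by simp
  have low: "\<gamma> t = \<delta> t" if "t \<le> k" for t
    using geo_uniq[OF ray_walk[OF r(1)] ray_walk[OF r(2)] g1 g2 ends that] .
  show ?thesis
  proof
    fix t show "\<gamma> t = \<delta> t"
    proof (cases "t \<le> k")
      case True then show ?thesis using low by simp
    next
      case False then show ?thesis using km[rule_format, of "t - k"] km2 by simp
    qed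
  qed
qed

lemma bnd_class: "\<omega> \<in> boundary E \<Longrightarrow> \<gamma> \<in> \<omega> \<Longrightarrow> \<omega> = {\<delta>. ray E \<delta> \<and> ray_equiv \<gamma> \<delta>}"
  unfolding boundary_def using re_sym re_trans by blast

lemma bnd_ray: "\<omega> \<in> boundary E \<Longrightarrow> \<gamma> \<in> \<omega> \<Longrightarrow> ray E \<gamma>"
  unfolding boundary_def by blast

lemma bnd_ne: "\<omega> \<in> boundary E \<Longrightarrow> \<exists>\<gamma>. \<gamma> \<in> \<omega>"
  unfolding boundary_def using re_refl by blast

lemma bnd_eq: "\<omega> \<in> boundary E \<Longrightarrow> \<omega>' \<in> boundary E \<Longrightarrow> \<gamma> \<in> \<omega> \<Longrightarrow> \<gamma> \<in> \<omega>' \<Longrightarrow> \<omega> = \<omega>'"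
  using bnd_class by metis

lemma bnd_equiv: "\<omega> \<in> boundary E \<Longrightarrow> \<gamma> \<in> \<omega> \<Longrightarrow> \<delta> \<in> \<omega> \<Longrightarrow> ray_equiv \<gamma> \<delta>"
  using bnd_class by blast

lemma bnd_mem: "\<omega> \<in> boundary E \<Longrightarrow> \<gamma> \<in> \<omega> \<Longrightarrow> ray E \<delta> \<Longrightarrow> ray_equiv \<gamma> \<delta> \<Longrightarrow> \<delta> \<in> \<omega>"
  using bnd_class by blast

lemma bnd_shift: "\<omega> \<in> boundary E \<Longrightarrow> \<gamma> \<in> \<omega> \<Longrightarrow> (\<lambda>n. \<gamma> (n + k)) \<in> \<omega>"
  using bnd_mem bnd_ray ray_shift re_shift by blast

lemma ray_from:
  assumes b: "\<omega> \<in> boundary E" shows "\<exists>\<delta>\<in>\<omega>. \<delta> 0 = x"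
proof -
  obtain \<gamma> where g: "\<gamma> \<in> \<omega>" using bnd_ne[OF b] by blast
  have rg: "ray E \<gamma>" using bnd_ray[OF b g] .
  define v where "v = (LEAST v. \<exists>a. d x (\<gamma> a) = v)"
  have "\<exists>a. d x (\<gamma> a) = v" unfolding v_def by (rule LeastI_ex) blast
  then obtain a where a: "d x (\<gamma> a) = v" by blast
  have amin: "\<And>a'. v \<le> d x (\<gamma> a')" unfolding v_def by (rule Least_le) blast
  define m where "m = d x (\<gamma> a)"
  obtain p where p: "p 0 = x" "p m = \<gamma> a" "walk E p m" "\<forall>t\<le>m. d x (p t) = t"
    using geo_ex m_def by blast
  define \<rho> where "\<rho> = (\<lambda>i. if i \<le> m then p i else \<gamma> (a + (i - m)))"
  have \<rho>hi: "\<And>i. m \<le> i \<Longrightarrow> \<rho> i = \<gamma> (a + (i - m))" unfolding \<rho>_def using p(2) by auto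
  have "ray E \<rho>" unfolding ray_def
  proof
    fix n
    have edge: "E (\<rho> n) (\<rho> (Suc n))"
    proof (cases "n < m")
      case True then show ?thesis using p(3) unfolding \<rho>_def walk_def by auto
    next
      case False
      then have "\<rho> n = \<gamma> (a + (n - m))" "\<rho> (Suc n) = \<gamma> (Suc (a + (n - m)))" using \<rho>hi by (auto simp: Suc_diff_le)
      then show ?thesis using rg unfolding ray_def by simp
    qed
    have nb: "\<rho> n \<noteq> \<rho> (Suc (Suc n))"
    proof (cases "Suc (Suc n) \<le> m")
      case True
      have "\<rho> n = p n" "\<rho> (Suc (Suc n)) = p (Suc (Suc n))" unfolding \<rho>_def using True by auto
      moreover have "d x (p n) = n" "d x (p (Suc (Suc n))) = Suc (Suc n)" using p(4) True by auto
      ultimately show ?thesis by auto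
    next
      case False
      show ?thesis
      proof (cases "m \<le> n")
        case True
        then have "\<rho> n = \<gamma> (a + (n - m))" "\<rho> (Suc (Suc n)) = \<gamma> (Suc (Suc (a + (n - m))))" using \<rho>hi by (auto simp: Suc_diff_le)
        then show ?thesis using rg unfolding ray_def by simp
      next
        case False
        with \<open>\<not> Suc (Suc n) \<le> m\<close> have nm: "Suc n = m" by simp
        have "\<rho> n = p n" unfolding \<rho>_def using nm by simp
        moreover have "\<rho> (Suc (Suc n)) = \<gamma> (Suc a)" using \<rho>hi[of "Suc (Suc n)"] nm by simp
        moreover have "d x (p n) = n" using p(4) nm by simp
        moreover have "v \<le> d x (\<gamma> (Suc a))" by (rule amin)
        ultimately show ?thesis using a m_def nm by auto
      qed
    qed
    show "E (\<rho> n) (\<rho> (Suc n)) \<and> \<rho> n \<noteq> \<rho> (Suc (Suc n))" using edge nb by simp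
  qed
  moreover have "ray_equiv \<gamma> \<rho>"
    unfolding ray_equiv_def by (rule exI[of _ a], rule exI[of _ m]) (simp add: \<rho>hi add.commute)
  ultimately have "\<rho> \<in> \<omega>" using bnd_mem[OF b g] by blast
  moreover have "\<rho> 0 = x" using p(1) unfolding \<rho>_def by simp
  ultimately show ?thesis by blast
qed

lemma geo_ray: assumes b: "\<omega> \<in> boundary E" shows "geo_ray x \<omega> \<in> \<omega> \<and> geo_ray x \<omega> 0 = x"
proof -
  have "\<exists>!\<gamma>. \<gamma> \<in> \<omega> \<and> \<gamma> 0 = x"
    using ray_from[OF b, of x] ray_same bnd_ray[OF b] bnd_equiv[OF b] by metis
  thus ?thesis unfolding geo_ray_def by (rule theI')
qed

lemma geo_ray_eq: "\<omega> \<in> boundary E \<Longrightarrow> \<delta> \<in> \<omega> \<Longrightarrow> geo_ray (\<delta> 0) \<omega> = \<delta>"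
  using geo_ray ray_same bnd_ray bnd_equiv by metis

end

context T begin

lemma range_geo_inj:
  assumes b: "\<omega> \<in> boundary E" and eq: "range (geo_ray y \<omega>) = range (geo_ray y' \<omega>)"
  shows "y' = y"
proof -
  let ?g = "geo_ray y \<omega>"
  have g: "?g \<in> \<omega>" "?g 0 = y" using geo_ray[OF b] by auto
  have "y' \<in> range (geo_ray y' \<omega>)" using geo_ray[OF b, of y'] by (metis rangeI)
  then obtain a where a: "y' = ?g a" using eq by auto
  have sh: "geo_ray y' \<omega> = (\<lambda>n. ?g (n + a))"
    using geo_ray_eq[OF b bnd_shift[OF b g(1), of a]] a by simp
  have "y \<in> range (geo_ray y' \<omega>)" using eq g(2) by (metis rangeI)
  then obtain c where "y = ?g (c + a)" using sh by auto
  hence "d y (?g (c + a)) = 0" by simp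
  moreover have "d y (?g (c + a)) = c + a" using ray_geo[OF bnd_ray[OF b g(1)]] g(2) by simp
  ultimately have "a = 0" by simp
  thus ?thesis using a g by simp
qed

lemma horo_lim:
  assumes b: "\<omega> \<in> boundary E" and g: "\<gamma> \<in> \<omega>"
  shows "\<exists>N. \<forall>n\<ge>N. horo E o' x \<omega> = int (d o' (\<gamma> n)) - int (d x (\<gamma> n))"
proof -
  let ?\<rho> = "geo_ray o' \<omega>" and ?\<sigma> = "geo_ray x \<omega>"
  have \<rho>: "?\<rho> \<in> \<omega>" "?\<rho> 0 = o'" and \<sigma>: "?\<sigma> \<in> \<omega>" "?\<sigma> 0 = x" using geo_ray[OF b] by auto
  have "ray_equiv ?\<rho> ?\<sigma>" using bnd_equiv[OF b \<rho>(1) \<sigma>(1)] .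
  then have Kne: "\<exists>k m. \<forall>n. ?\<rho> (n + k) = ?\<sigma> (n + m)" unfolding ray_equiv_def .
  define k0 where "k0 = (LEAST k. \<exists>m. \<forall>n. ?\<rho> (n + k) = ?\<sigma> (n + m))"
  have "\<exists>m. \<forall>n. ?\<rho> (n + k0) = ?\<sigma> (n + m)" unfolding k0_def by (rule LeastI_ex) (use Kne in blast)
  then obtain m0 where m0: "\<forall>n. ?\<rho> (n + k0) = ?\<sigma> (n + m0)" by blast
  have kmin: "\<And>k m. \<forall>n. ?\<rho> (n + k) = ?\<sigma> (n + m) \<Longrightarrow> k0 \<le> k" unfolding k0_def by (rule Least_le) blast
  define y where "y = ?\<rho> k0"
  have gy: "geo_ray y \<omega> = (\<lambda>n. ?\<rho> (n + k0))"
    using geo_ray_eq[OF b bnd_shift[OF b \<rho>(1), of k0]] y_def by simp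
  have R: "range ?\<rho> \<inter> range ?\<sigma> = range (geo_ray y \<omega>)"
  proof
    show "range ?\<rho> \<inter> range ?\<sigma> \<subseteq> range (geo_ray y \<omega>)"
    proof
      fix z assume "z \<in> range ?\<rho> \<inter> range ?\<sigma>"
      then have "z \<in> range ?\<rho>" "z \<in> range ?\<sigma>" by auto
      then obtain a c where ac: "z = ?\<rho> a" "z = ?\<sigma> c" by blast
      have "k0 \<le> a"
      proof (rule ccontr)
        assume "\<not> k0 \<le> a"
        have "(\<lambda>n. ?\<rho> (n + a)) = geo_ray z \<omega>" using geo_ray_eq[OF b bnd_shift[OF b \<rho>(1), of a]] ac by simp
        moreover have "(\<lambda>n. ?\<sigma> (n + c)) = geo_ray z \<omega>" using geo_ray_eq[OF b bnd_shift[OF b \<sigma>(1), of c]] ac by simp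
        ultimately have "\<forall>n. ?\<rho> (n + a) = ?\<sigma> (n + c)" by metis
        hence "k0 \<le> a" by (rule kmin)
        thus False using \<open>\<not> k0 \<le> a\<close> by simp
      qed
      hence "z = geo_ray y \<omega> (a - k0)" using gy ac by simp
      thus "z \<in> range (geo_ray y \<omega>)" by simp
    qed
  next
    show "range (geo_ray y \<omega>) \<subseteq> range ?\<rho> \<inter> range ?\<sigma>"
    proof
      fix z assume "z \<in> range (geo_ray y \<omega>)"
      then obtain n where n: "z = ?\<rho> (n + k0)" using gy by auto
      then have "z = ?\<sigma> (n + m0)" using m0 by simp
      with n show "z \<in> range ?\<rho> \<inter> range ?\<sigma>" by blast
    qed
  qed
  have "(THE y. range ?\<rho> \<inter> range ?\<sigma> = range (geo_ray y \<omega>)) = y"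
    by (rule the_equality) (use R range_geo_inj[OF b] in auto)
  hence hv: "horo E o' x \<omega> = int (d o' y) - int (d x y)" unfolding horo_def Let_def by simp
  have dy: "d o' y = k0" using ray_geo[OF bnd_ray[OF b \<rho>(1)], of k0] \<rho>(2) y_def by simp
  have dy2: "d x y = m0" using ray_geo[OF bnd_ray[OF b \<sigma>(1)], of m0] \<sigma>(2) y_def m0[rule_format, of 0] by simp
  have "ray_equiv ?\<rho> \<gamma>" using bnd_equiv[OF b \<rho>(1) g] .
  then obtain k1 m1 where km1: "\<forall>n. ?\<rho> (n + k1) = \<gamma> (n + m1)" unfolding ray_equiv_def by blast
  show ?thesis
  proof (rule exI[of _ "m1 + k0"], intro allI impI)
    fix n assume n: "m1 + k0 \<le> n"
    define j where "j = n - m1 + k1"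
    have gn: "\<gamma> n = ?\<rho> j" using km1[rule_format, of "n - m1"] n j_def by simp
    have rj: "?\<rho> j = ?\<sigma> (j - k0 + m0)" using m0[rule_format, of "j - k0"] n j_def by simp
    have "d o' (\<gamma> n) = j" using gn ray_geo[OF bnd_ray[OF b \<rho>(1)], of j] \<rho>(2) by simp
    moreover have "d x (\<gamma> n) = j - k0 + m0" using gn rj ray_geo[OF bnd_ray[OF b \<sigma>(1)], of "j - k0 + m0"] \<sigma>(2) by simp
    moreover have "k0 \<le> j" using n j_def by simp
    ultimately show "horo E o' x \<omega> = int (d o' (\<gamma> n)) - int (d x (\<gamma> n))" using hv dy dy2 by simp
  qed
qed

end

context T begin

lemma aut_bij: "g \<in> aut E \<Longrightarrow> bij g" unfolding aut_def by blast
lemma aut_E: "g \<in> aut E \<Longrightarrow> E x y \<longleftrightarrow> E (g x) (g y)" unfolding aut_def by blast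
lemma aut_inj: "g \<in> aut E \<Longrightarrow> inj g" using aut_bij bij_is_inj by blast
lemma aut_inv_f: "g \<in> aut E \<Longrightarrow> inv g (g x) = x" using aut_inj inv_f_f by metis
lemma aut_f_inv: "g \<in> aut E \<Longrightarrow> g (inv g x) = x" using aut_bij bij_inv_eq_iff by metis

lemma aut_inv: "g \<in> aut E \<Longrightarrow> inv g \<in> aut E"
proof -
  assume g: "g \<in> aut E"
  have "bij (inv g)" using aut_bij[OF g] bij_imp_bij_inv by blast
  moreover have "E x y \<longleftrightarrow> E (inv g x) (inv g y)" for x y
    using aut_E[OF g, of "inv g x" "inv g y"] aut_f_inv[OF g] by simp
  ultimately show ?thesis unfolding aut_def by blast
qed

lemma aut_comp: "f \<in> aut E \<Longrightarrow> g \<in> aut E \<Longrightarrow> f \<circ> g \<in> aut E"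
  unfolding aut_def using bij_comp by fastforce

lemma aut_id: "id \<in> aut E" unfolding aut_def by simp

lemma aut_d_le: "g \<in> aut E \<Longrightarrow> d (g x) (g y) \<le> d x y"
proof -
  assume g: "g \<in> aut E"
  obtain p where p: "p 0 = x" "p (d x y) = y" "walk E p (d x y)" using d_walk by blast
  have w: "walk E (g \<circ> p) (d x y)" using p(3) unfolding walk_def by (simp add: aut_E[OF g, symmetric])
  have e: "(g \<circ> p) 0 = g x" "(g \<circ> p) (d x y) = g y" using p(1,2) by auto
  show ?thesis by (rule d_le[OF e w])
qed

lemma aut_d: "g \<in> aut E \<Longrightarrow> d (g x) (g y) = d x y"
proof -
  assume g: "g \<in> aut E"
  have "d (inv g (g x)) (inv g (g y)) \<le> d (g x) (g y)" using aut_d_le[OF aut_inv[OF g]] .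
  thus ?thesis using aut_d_le[OF g, of x y] aut_inv_f[OF g] by simp
qed

lemma aut_ray: "g \<in> aut E \<Longrightarrow> ray E \<gamma> \<Longrightarrow> ray E (g \<circ> \<gamma>)"
proof -
  assume g: "g \<in> aut E" and r: "ray E \<gamma>"
  show ?thesis using r unfolding ray_def by (simp add: aut_E[OF g, symmetric] inj_eq[OF aut_inj[OF g]])
qed

lemma bd_act_bnd:
  assumes g: "g \<in> aut E" and b: "\<omega> \<in> boundary E" and c: "\<gamma> \<in> \<omega>"
  shows "bd_act g \<omega> \<in> boundary E \<and> g \<circ> \<gamma> \<in> bd_act g \<omega>"
proof -
  have cl: "\<omega> = {\<delta>. ray E \<delta> \<and> ray_equiv \<gamma> \<delta>}" using bnd_class[OF b c] .
  have rg: "ray E \<gamma>" using bnd_ray[OF b c] .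
  have eq: "bd_act g \<omega> = {\<delta>'. ray E \<delta>' \<and> ray_equiv (g \<circ> \<gamma>) \<delta>'}"
  proof
    show "bd_act g \<omega> \<subseteq> {\<delta>'. ray E \<delta>' \<and> ray_equiv (g \<circ> \<gamma>) \<delta>'}"
    proof
      fix \<delta>' assume "\<delta>' \<in> bd_act g \<omega>"
      then obtain \<delta> where dd: "\<delta>' = g \<circ> \<delta>" "\<delta> \<in> \<omega>" unfolding bd_act_def by blast
      have "ray E \<delta>" "ray_equiv \<gamma> \<delta>" using dd(2) cl by auto
      then show "\<delta>' \<in> {\<delta>'. ray E \<delta>' \<and> ray_equiv (g \<circ> \<gamma>) \<delta>'}"
        using aut_ray[OF g] dd(1) unfolding ray_equiv_def by (auto, metis)
    qed
  next
    show "{\<delta>'. ray E \<delta>' \<and> ray_equiv (g \<circ> \<gamma>) \<delta>'} \<subseteq> bd_act g \<omega>"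
    proof
      fix \<delta>' assume "\<delta>' \<in> {\<delta>'. ray E \<delta>' \<and> ray_equiv (g \<circ> \<gamma>) \<delta>'}"
      then have r: "ray E \<delta>'" "ray_equiv (g \<circ> \<gamma>) \<delta>'" by auto
      define \<delta> where "\<delta> = inv g \<circ> \<delta>'"
      have "ray E \<delta>" unfolding \<delta>_def using aut_ray[OF aut_inv[OF g] r(1)] .
      moreover have "ray_equiv \<gamma> \<delta>"
      proof -
        obtain k m where "\<forall>n. g (\<gamma> (n + k)) = \<delta>' (n + m)" using r(2) unfolding ray_equiv_def by auto
        hence "\<forall>n. \<gamma> (n + k) = \<delta> (n + m)" unfolding \<delta>_def using aut_inv_f[OF g] by (metis comp_apply)
        thus ?thesis unfolding ray_equiv_def by blast
      qed
      ultimately have "\<delta> \<in> \<omega>" using cl by blast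
      moreover have "\<delta>' = g \<circ> \<delta>" unfolding \<delta>_def using aut_f_inv[OF g] by (simp add: fun_eq_iff)
      ultimately show "\<delta>' \<in> bd_act g \<omega>" unfolding bd_act_def by blast
    qed
  qed
  have "bd_act g \<omega> \<in> boundary E" unfolding boundary_def using eq aut_ray[OF g rg] by blast
  moreover have "g \<circ> \<gamma> \<in> bd_act g \<omega>" using c unfolding bd_act_def by blast
  ultimately show ?thesis by blast
qed

lemma bd_comp: "bd_act (f \<circ> g) \<omega> = bd_act f (bd_act g \<omega>)"
  unfolding bd_act_def by (auto simp: image_comp o_assoc)

lemma bd_id: "bd_act id \<omega> = \<omega>" unfolding bd_act_def by simp

lemma bd_inv: "g \<in> aut E \<Longrightarrow> bd_act (inv g) (bd_act g \<omega>) = \<omega>"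
proof -
  assume g: "g \<in> aut E"
  have "inv g \<circ> g = id" using aut_inv_f[OF g] by (simp add: fun_eq_iff)
  thus ?thesis using bd_comp[of "inv g" g \<omega>] bd_id[of \<omega>] by simp
qed

lemma horo_base: "\<omega> \<in> boundary E \<Longrightarrow> horo E o' o' \<omega> = 0"
proof -
  assume b: "\<omega> \<in> boundary E"
  obtain \<gamma> where "\<gamma> \<in> \<omega>" using bnd_ne[OF b] by blast
  then obtain N where "\<forall>n\<ge>N. horo E o' o' \<omega> = int (d o' (\<gamma> n)) - int (d o' (\<gamma> n))"
    using horo_lim[OF b] by blast
  thus ?thesis by auto
qed

lemma horo_cocycle:
  assumes g: "g \<in> aut E" and b: "\<omega> \<in> boundary E"
  shows "horo E o' (g x) (bd_act g \<omega>) = horo E o' x \<omega> + horo E o' (g o') (bd_act g \<omega>)"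
proof -
  obtain \<gamma> where c: "\<gamma> \<in> \<omega>" using bnd_ne[OF b] by blast
  have gb: "bd_act g \<omega> \<in> boundary E" "g \<circ> \<gamma> \<in> bd_act g \<omega>" using bd_act_bnd[OF g b c] by auto
  obtain N1 where N1: "\<forall>n\<ge>N1. horo E o' (g x) (bd_act g \<omega>) = int (d o' ((g \<circ> \<gamma>) n)) - int (d (g x) ((g \<circ> \<gamma>) n))"
    using horo_lim[OF gb] by blast
  obtain N2 where N2: "\<forall>n\<ge>N2. horo E o' (g o') (bd_act g \<omega>) = int (d o' ((g \<circ> \<gamma>) n)) - int (d (g o') ((g \<circ> \<gamma>) n))"
    using horo_lim[OF gb] by blast
  obtain N3 where N3: "\<forall>n\<ge>N3. horo E o' x \<omega> = int (d o' (\<gamma> n)) - int (d x (\<gamma> n))"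
    using horo_lim[OF b c] by blast
  define n where "n = N1 + N2 + N3"
  have "horo E o' (g x) (bd_act g \<omega>) = int (d o' (g (\<gamma> n))) - int (d x (\<gamma> n))"
    using N1[rule_format, of n] aut_d[OF g] n_def by simp
  moreover have "horo E o' (g o') (bd_act g \<omega>) = int (d o' (g (\<gamma> n))) - int (d o' (\<gamma> n))"
    using N2[rule_format, of n] aut_d[OF g] n_def by simp
  moreover have "horo E o' x \<omega> = int (d o' (\<gamma> n)) - int (d x (\<gamma> n))"
    using N3[rule_format, of n] n_def by simp
  ultimately show ?thesis by simp
qed

end


lemma bij_point:
  assumes "finite A" "finite B" "card A = card B" "a \<in> A" "b \<in> B"
  shows "\<exists>s. bij_betw s A B \<and> s a = b"
proof -
  have "card (A - {a}) = card (B - {b})" using assms by simp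
  then obtain h where h: "bij_betw h (A - {a}) (B - {b})"
    using finite_same_card_bij assms by (meson finite_Diff)
  have "bij_betw (\<lambda>x. if x \<in> {a} then b else h x) ({a} \<union> (A - {a})) ({b} \<union> (B - {b}))"
    by (rule bij_betw_disjoint_Un) (use h in auto)
  moreover have "{a} \<union> (A - {a}) = A" "{b} \<union> (B - {b}) = B" using assms by auto
  ultimately show ?thesis by (intro exI[of _ "\<lambda>x. if x \<in> {a} then b else h x"]) simp
qed

context T begin

definition ch where "ch b x = {y. E x y \<and> d b y = d b x + 1}"

lemma ch_fin: "finite (ch b x)" unfolding ch_def using deg(1)[of x] by (rule rev_finite_subset) auto

lemma ch_card: "card (ch b x) = (if x = b then q + 1 else q)"
proof (cases "x = b")
  case True
  have "ch b x = {y. E x y}" unfolding ch_def using True d_edge by auto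
  then show ?thesis using True deg by simp
next
  case False
  have pe: "E x (par b x)" "d b (par b x) + 1 = d b x" using par[OF False] by auto
  have "{y. E x y} = insert (par b x) (ch b x)"
  proof
    show "{y. E x y} \<subseteq> insert (par b x) (ch b x)"
    proof
      fix y assume "y \<in> {y. E x y}"
      hence e: "E x y" by simp
      show "y \<in> insert (par b x) (ch b x)"
      proof (cases "d b y = d b x + 1")
        case True then show ?thesis unfolding ch_def using e by simp
      next
        case False
        hence "d b y < d b x" using nbr[OF e, of b] by auto
        then show ?thesis using par_uniq[OF e] by auto
      qed
    qed
    show "insert (par b x) (ch b x) \<subseteq> {y. E x y}" unfolding ch_def using pe by auto
  qed
  moreover have "par b x \<notin> ch b x" unfolding ch_def using pe by auto
  ultimately have "card {y. E x y} = card (ch b x) + 1" using ch_fin by simp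
  then show ?thesis using False deg by simp
qed

lemma ch_card_eq: "d b x = d b x' \<Longrightarrow> card (ch b x) = card (ch b x')"
  using ch_card d_zero by (metis d_refl)

lemma ch_par: "y \<in> ch b x \<Longrightarrow> y \<noteq> b \<and> par b y = x"
proof -
  assume "y \<in> ch b x"
  hence y: "E x y" "d b y = d b x + 1" unfolding ch_def by auto
  have "y \<noteq> b" using y by auto
  moreover have "par b y = x" using par_uniq[OF symE[OF y(1)]] y by simp
  ultimately show ?thesis by simp
qed

lemma in_ch: "x \<noteq> b \<Longrightarrow> x \<in> ch b (par b x)"
  unfolding ch_def using par symE by fastforce

end

locale TE = T E q for E :: "'v \<Rightarrow> 'v \<Rightarrow> bool" and q +
  fixes b :: 'v and \<alpha> \<beta> :: "nat \<Rightarrow> 'v"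
  assumes ra: "ray E \<alpha>" and rb: "ray E \<beta>" and a0: "\<alpha> 0 = b" and b0: "\<beta> 0 = b"
begin

definition \<sigma> where "\<sigma> p p' = (SOME s. bij_betw s (ch b p) (ch b p') \<and>
   (\<forall>t. p = \<alpha> t \<and> p' = \<beta> t \<longrightarrow> s (\<alpha> (Suc t)) = \<beta> (Suc t)))"

lemma da: "d b (\<alpha> t) = t" using ray_geo[OF ra] a0 by simp
lemma db: "d b (\<beta> t) = t" using ray_geo[OF rb] b0 by simp

lemma a_ch: "\<alpha> (Suc t) \<in> ch b (\<alpha> t)" unfolding ch_def using ra da unfolding ray_def by simp
lemma b_ch: "\<beta> (Suc t) \<in> ch b (\<beta> t)" unfolding ch_def using rb db unfolding ray_def by simp

lemma \<sigma>_ok: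
  assumes eq: "d b p = d b p'"
  shows "bij_betw (\<sigma> p p') (ch b p) (ch b p') \<and>
   (\<forall>t. p = \<alpha> t \<and> p' = \<beta> t \<longrightarrow> \<sigma> p p' (\<alpha> (Suc t)) = \<beta> (Suc t))"
proof -
  have cc: "card (ch b p) = card (ch b p')" using ch_card_eq[OF eq] .
  have "\<exists>s. bij_betw s (ch b p) (ch b p') \<and>
   (\<forall>t. p = \<alpha> t \<and> p' = \<beta> t \<longrightarrow> s (\<alpha> (Suc t)) = \<beta> (Suc t))"
  proof (cases "\<exists>t. p = \<alpha> t \<and> p' = \<beta> t")
    case True
    then obtain t where t: "p = \<alpha> t" "p' = \<beta> t" by blast
    obtain s where s: "bij_betw s (ch b p) (ch b p')" "s (\<alpha> (Suc t)) = \<beta> (Suc t)"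
      using bij_point[OF ch_fin ch_fin cc, of "\<alpha> (Suc t)" "\<beta> (Suc t)"] a_ch b_ch t by blast
    have "\<forall>t'. p = \<alpha> t' \<and> p' = \<beta> t' \<longrightarrow> s (\<alpha> (Suc t')) = \<beta> (Suc t')"
    proof (intro allI impI)
      fix t' assume "p = \<alpha> t' \<and> p' = \<beta> t'"
      hence "t' = t" using t da by metis
      thus "s (\<alpha> (Suc t')) = \<beta> (Suc t')" using s by simp
    qed
    then show ?thesis using s by blast
  next
    case False
    then show ?thesis using finite_same_card_bij[OF ch_fin ch_fin cc] by blast
  qed
  then show ?thesis unfolding \<sigma>_def by (rule someI_ex)
qed

primrec G :: "nat \<Rightarrow> 'v \<Rightarrow> 'v" where
  "G 0 x = x"
| "G (Suc n) x = \<sigma> (par b x) (G n (par b x)) x"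

definition f where "f x = G (d b x) x"

lemma f_b: "f b = b" unfolding f_def by simp

lemma f_rec: "x \<noteq> b \<Longrightarrow> f x = \<sigma> (par b x) (f (par b x)) x"
proof -
  assume x: "x \<noteq> b"
  have "d b x = Suc (d b (par b x))" using par[OF x] by simp
  thus ?thesis unfolding f_def by simp
qed

lemma f_d: "d b (f x) = d b x"
proof -
  have "\<forall>x. d b x = n \<longrightarrow> d b (f x) = n" for n
  proof (induction n)
    case 0 then show ?case using f_b d_zero by (metis d_refl)
  next
    case (Suc n)
    show ?case
    proof (intro allI impI)
      fix x assume x: "d b x = Suc n"
      hence xb: "x \<noteq> b" by auto
      let ?p = "par b x"
      have dp: "d b ?p = n" using par[OF xb] x by simp
      hence dfp: "d b (f ?p) = n" using Suc by blast
      have "bij_betw (\<sigma> ?p (f ?p)) (ch b ?p) (ch b (f ?p))" using \<sigma>_ok[of ?p "f ?p"] dp dfp by simp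
      hence "f x \<in> ch b (f ?p)" using f_rec[OF xb] in_ch[OF xb] bij_betw_imp_surj_on by fastforce
      then show "d b (f x) = Suc n" unfolding ch_def using dfp by simp
    qed
  qed
  thus ?thesis by blast
qed

lemma f_ch: "x \<noteq> b \<Longrightarrow> f x \<in> ch b (f (par b x))"
proof -
  assume xb: "x \<noteq> b"
  let ?p = "par b x"
  have "bij_betw (\<sigma> ?p (f ?p)) (ch b ?p) (ch b (f ?p))" using \<sigma>_ok[of ?p "f ?p"] f_d by simp
  thus "f x \<in> ch b (f ?p)" using f_rec[OF xb] in_ch[OF xb] bij_betw_imp_surj_on by fastforce
qed

lemma f_par: "x \<noteq> b \<Longrightarrow> par b (f x) = f (par b x) \<and> f x \<noteq> b"
  using f_ch ch_par by blast

lemma f_ray: "f (\<alpha> t) = \<beta> t"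
proof (induction t)
  case 0 then show ?case using a0 b0 f_b by simp
next
  case (Suc t)
  have ne: "\<alpha> (Suc t) \<noteq> b" and pa: "par b (\<alpha> (Suc t)) = \<alpha> t" using ch_par[OF a_ch] by auto
  have "f (\<alpha> (Suc t)) = \<sigma> (\<alpha> t) (\<beta> t) (\<alpha> (Suc t))" using f_rec[OF ne] pa Suc by simp
  also have "\<dots> = \<beta> (Suc t)" using \<sigma>_ok[of "\<alpha> t" "\<beta> t"] da db by simp
  finally show ?case .
qed

lemma f_inj: "inj f"
proof -
  have "\<forall>x y. d b x = n \<longrightarrow> f x = f y \<longrightarrow> x = y" for n
  proof (induction n)
    case 0
    show ?case
    proof (intro allI impI)
      fix x y assume "d b x = 0" "f x = f y"
      hence "x = b" "d b y = 0" using f_d d_zero by (metis, metis)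
      thus "x = y" using d_zero by metis
    qed
  next
    case (Suc n)
    show ?case
    proof (intro allI impI)
      fix x y assume x: "d b x = Suc n" and e: "f x = f y"
      have y: "d b y = Suc n" using x e f_d by metis
      have xb: "x \<noteq> b" "y \<noteq> b" using x y by auto
      have "f (par b x) = f (par b y)" using f_par[OF xb(1)] f_par[OF xb(2)] e by metis
      moreover have "d b (par b x) = n" using par[OF xb(1)] x by simp
      ultimately have pp: "par b x = par b y" using Suc by blast
      let ?p = "par b x"
      have "bij_betw (\<sigma> ?p (f ?p)) (ch b ?p) (ch b (f ?p))" using \<sigma>_ok[of ?p "f ?p"] f_d by simp
      hence "inj_on (\<sigma> ?p (f ?p)) (ch b ?p)" by (rule bij_betw_imp_inj_on)
      moreover have "x \<in> ch b ?p" "y \<in> ch b ?p" using in_ch[OF xb(1)] in_ch[OF xb(2)] pp by auto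
      moreover have "\<sigma> ?p (f ?p) x = \<sigma> ?p (f ?p) y" using f_rec xb pp e by metis
      ultimately show "x = y" unfolding inj_on_def by blast
    qed
  qed
  thus ?thesis unfolding inj_def by blast
qed

lemma f_surj: "surj f"
proof -
  have "\<forall>y. d b y = n \<longrightarrow> (\<exists>x. f x = y)" for n
  proof (induction n)
    case 0 then show ?case using f_b d_zero by metis
  next
    case (Suc n)
    show ?case
    proof (intro allI impI)
      fix y assume y: "d b y = Suc n"
      hence yb: "y \<noteq> b" by auto
      have "d b (par b y) = n" using par[OF yb] y by simp
      then obtain p where p: "f p = par b y" using Suc by blast
      have "bij_betw (\<sigma> p (f p)) (ch b p) (ch b (f p))" using \<sigma>_ok[of p "f p"] f_d by simp
      moreover have "y \<in> ch b (f p)" using in_ch[OF yb] p by simp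
      ultimately obtain x where x: "x \<in> ch b p" "\<sigma> p (f p) x = y" using bij_betw_imp_surj_on by (metis imageE)
      have "x \<noteq> b" "par b x = p" using ch_par[OF x(1)] by auto
      hence "f x = y" using f_rec x(2) by metis
      thus "\<exists>x. f x = y" by blast
    qed
  qed
  note A = this
  show ?thesis unfolding surj_def
  proof
    fix y show "\<exists>x. y = f x" using A[of "d b y"] by metis
  qed
qed

lemma f_nb: "f x = b \<longleftrightarrow> x = b"
  using f_b f_inj by (metis injD)

lemma f_E: "E x y \<longleftrightarrow> E (f x) (f y)"
proof -
  have "E (f x) (f y) \<longleftrightarrow> (f x \<noteq> b \<and> f y = par b (f x)) \<or> (f y \<noteq> b \<and> f x = par b (f y))"
    by (rule edge_par)
  also have "\<dots> \<longleftrightarrow> (x \<noteq> b \<and> f y = f (par b x)) \<or> (y \<noteq> b \<and> f x = f (par b y))"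
    using f_par f_nb by metis
  also have "\<dots> \<longleftrightarrow> (x \<noteq> b \<and> y = par b x) \<or> (y \<noteq> b \<and> x = par b y)"
    using f_inj by (metis injD)
  also have "\<dots> \<longleftrightarrow> E x y" by (rule edge_par[symmetric])
  finally show ?thesis by simp
qed

lemma f_stab: "f \<in> stab E b"
  unfolding stab_def aut_def using f_inj f_surj f_E f_b bij_def by blast

end

context T begin
lemma ext_aut:
  assumes "ray E \<alpha>" "ray E \<beta>" "\<alpha> 0 = b" "\<beta> 0 = b"
  shows "\<exists>k\<in>stab E b. \<forall>t. k (\<alpha> t) = \<beta> t"
proof -
  interpret X: TE E q b \<alpha> \<beta> by unfold_locales (use assms in auto)
  show ?thesis using X.f_stab X.f_ray by blast
qed
end



lemma funpow_inv_cancel: fixes f :: "'a \<Rightarrow> 'a" shows "bij f \<Longrightarrow> (inv f ^^ n) ((f ^^ n) x) = x"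
proof (induction n arbitrary: x)
  case 0 then show ?case by simp
next
  case (Suc n)
  have e: "(f ^^ Suc n) x = (f ^^ n) (f x)" by (simp add: funpow_Suc_right del: funpow.simps)
  have "(inv f ^^ Suc n) ((f ^^ Suc n) x) = inv f ((inv f ^^ n) ((f ^^ n) (f x)))"
    unfolding e by simp
  also have "\<dots> = inv f (f x)" using Suc by simp
  also have "\<dots> = x" using Suc(2) by (simp add: bij_is_inj)
  finally show ?case .
qed

lemma funpow_inv_cancel2: fixes f :: "'a \<Rightarrow> 'a" shows "bij f \<Longrightarrow> (f ^^ n) ((inv f ^^ n) x) = x"
  using funpow_inv_cancel[of "inv f" n x] by (simp add: inv_inv_eq bij_imp_bij_inv)

lemma zpow_cancel: "bij f \<Longrightarrow> zpow f (- j) (zpow f j x) = x"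
proof (cases "0 \<le> j")
  case True
  assume b: "bij f"
  show ?thesis
  proof (cases "j = 0")
    case True then show ?thesis unfolding zpow_def by simp
  next
    case False
    then show ?thesis using \<open>0 \<le> j\<close> funpow_inv_cancel[OF b] unfolding zpow_def by simp
  qed
next
  case False
  assume b: "bij f"
  then show ?thesis using False funpow_inv_cancel2[OF b] unfolding zpow_def by simp
qed

locale TM = T E q for E :: "'v \<Rightarrow> 'v \<Rightarrow> bool" and q +
  fixes v0 :: 'v and \<omega>m \<omega>p :: "(nat \<Rightarrow> 'v) set" and L :: "int \<Rightarrow> 'v" and \<tau> r :: "'v \<Rightarrow> 'v"
  assumes bm: "\<omega>m \<in> boundary E" and bp: "\<omega>p \<in> boundary E"
    and L: "line E L" "L 0 = v0" "(\<lambda>n. L (int n)) \<in> \<omega>p" "(\<lambda>n. L (- int n)) \<in> \<omega>m"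
    and tau: "\<tau> \<in> aut E" "\<forall>i. \<tau> (L i) = L (i + 1)"
    and r: "r \<in> stab E v0" "r \<circ> r = id" "\<forall>j. r \<circ> zpow \<tau> j \<circ> inv r = zpow \<tau> (- j)"
begin

lemma ray_Lp: "ray E (\<lambda>n. L (a + int n))"
proof -
  have *: "\<forall>i. E (L i) (L (i + 1)) \<and> L i \<noteq> L (i + 2)" using L(1) unfolding line_def .
  show ?thesis unfolding ray_def
  proof
    fix n
    have e1: "a + int (Suc n) = (a + int n) + 1" and e2: "a + int (Suc (Suc n)) = (a + int n) + 2" by simp_all
    show "E (L (a + int n)) (L (a + int (Suc n))) \<and> L (a + int n) \<noteq> L (a + int (Suc (Suc n)))"
      unfolding e1 e2 using *[rule_format, of "a + int n"] .
  qed
qed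

lemma dL: "d (L a) (L (a + int n)) = n"
  using ray_geo[OF ray_Lp, of a n] by simp

lemma dL2: "d (L a) (L c) = nat \<bar>c - a\<bar>"
proof (cases "a \<le> c")
  case True
  then show ?thesis using dL[of a "nat (c - a)"] by simp
next
  case False
  then show ?thesis using dL[of c "nat (a - c)"] d_sym by simp
qed

lemma tau_inv_L: "inv \<tau> (L i) = L (i - 1)"
  using tau(2)[rule_format, of "i - 1"] aut_inv_f[OF tau(1)] by (metis diff_add_cancel)

lemma tau_pow: "(\<tau> ^^ n) (L i) = L (i + int n)"
  by (induction n) (auto simp: tau(2) algebra_simps)

lemma tau_ipow: "(inv \<tau> ^^ n) (L i) = L (i - int n)"
  by (induction n) (auto simp: tau_inv_L algebra_simps)

lemma zpow_L: "zpow \<tau> j (L i) = L (i + j)"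
  unfolding zpow_def by (auto simp: tau_pow tau_ipow)

lemma funpow_aut: "f \<in> aut E \<Longrightarrow> f ^^ n \<in> aut E"
  by (induction n) (auto simp: aut_id aut_comp)

lemma zpow_aut: "zpow \<tau> j \<in> aut E"
  unfolding zpow_def using funpow_aut tau(1) aut_inv by auto

lemma tau_bij: "bij \<tau>" using aut_bij[OF tau(1)] .

lemma bd_zpow: "bd_act (zpow \<tau> j) \<omega>p = \<omega>p"
proof -
  let ?Lp = "\<lambda>n. L (int n)"
  have a: "zpow \<tau> j \<circ> ?Lp \<in> bd_act (zpow \<tau> j) \<omega>p" "bd_act (zpow \<tau> j) \<omega>p \<in> boundary E"
    using bd_act_bnd[OF zpow_aut bp L(3)] by auto
  have eqf: "zpow \<tau> j \<circ> ?Lp = (\<lambda>n. L (j + int n))" by (auto simp: zpow_L add.commute)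
  have "ray_equiv ?Lp (\<lambda>n. L (j + int n))"
    unfolding ray_equiv_def
  proof (cases "0 \<le> j")
    case True
    show "\<exists>k m. \<forall>n. L (int (n + k)) = L (j + int (n + m))"
      by (rule exI[of _ "nat j"], rule exI[of _ 0]) (use True in \<open>simp add: algebra_simps\<close>)
  next
    case False
    show "\<exists>k m. \<forall>n. L (int (n + k)) = L (j + int (n + m))"
      by (rule exI[of _ 0], rule exI[of _ "nat (- j)"]) (use False in \<open>simp add: algebra_simps\<close>)
  qed
  hence "zpow \<tau> j \<circ> ?Lp \<in> \<omega>p" using bnd_mem[OF bp L(3)] ray_Lp eqf by simp
  thus ?thesis using bnd_eq[OF a(2) bp a(1)] by simp
qed

lemma horo_L: "horo E v0 (L j) \<omega>p = j"
proof -
  obtain N where N: "\<forall>n\<ge>N. horo E v0 (L j) \<omega>p = int (d v0 (L (int n))) - int (d (L j) (L (int n)))"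
    using horo_lim[OF bp L(3)] by blast
  define n where "n = N + nat \<bar>j\<bar>"
  have nN: "N \<le> n" "\<bar>j\<bar> \<le> int n" using n_def by auto
  have "horo E v0 (L j) \<omega>p = int (d v0 (L (int n))) - int (d (L j) (L (int n)))"
    using N nN(1) by blast
  also have "\<dots> = int (d (L 0) (L (int n))) - int (d (L j) (L (int n)))" using L(2) by simp
  also have "\<dots> = j" using dL2[of 0 "int n"] dL2[of j "int n"] nN(2) by simp
  finally show ?thesis .
qed

lemma inv_r: "inv r = r"
  using inv_unique_comp[OF r(2) r(2)] .

lemma r_L: "r (L j) = L (- j)"
proof -
  have rv: "r v0 = v0" using r(1) unfolding stab_def by simp
  have "(r \<circ> zpow \<tau> j \<circ> inv r) (L 0) = zpow \<tau> (- j) (L 0)" using r(3) by simp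
  hence "r (zpow \<tau> j (r (L 0))) = zpow \<tau> (- j) (L 0)" using inv_r by simp
  moreover have "r (L 0) = L 0" using rv L(2) by simp
  ultimately show ?thesis using zpow_L[of j 0] zpow_L[of "- j" 0] by simp
qed

lemma r_aut: "r \<in> aut E" using r(1) unfolding stab_def by simp

lemma bd_r: "bd_act r \<omega>p = \<omega>m"
proof -
  have a: "r \<circ> (\<lambda>n. L (int n)) \<in> bd_act r \<omega>p" "bd_act r \<omega>p \<in> boundary E"
    using bd_act_bnd[OF r_aut bp L(3)] by auto
  have "r \<circ> (\<lambda>n. L (int n)) = (\<lambda>n. L (- int n))" using r_L by auto
  thus ?thesis using bnd_eq[OF a(2) bm _ L(4)] a(1) by simp
qed

lemma H_uniq:
  assumes k: "k \<in> stab E v0" and n: "n \<in> horo_stab E \<omega>p" and g: "g = k \<circ> n \<circ> zpow \<tau> j"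
  shows "j = horo E v0 (g v0) (bd_act g \<omega>p)"
proof -
  have ka: "k \<in> aut E" "k v0 = v0" using k unfolding stab_def by auto
  have na: "n \<in> aut E" "bd_act n \<omega>p = \<omega>p" using n unfolding horo_stab_def by auto
  obtain z where z: "n z = z" using n unfolding horo_stab_def by auto
  have bg: "bd_act g \<omega>p = bd_act k \<omega>p" using g bd_comp bd_zpow na(2) by metis
  have gv: "g v0 = k (n (L j))" using g zpow_L[of j 0] L(2) by simp
  have bk: "bd_act k \<omega>p \<in> boundary E" using bd_act_bnd[OF ka(1) bp L(3)] by blast
  have "horo E v0 (g v0) (bd_act g \<omega>p) = horo E v0 (k (n (L j))) (bd_act k \<omega>p)"
    using gv bg by simp
  also have "\<dots> = horo E v0 (n (L j)) \<omega>p + horo E v0 (k v0) (bd_act k \<omega>p)"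
    by (rule horo_cocycle[OF ka(1) bp, where x="n (L j)" and o'=v0])
  also have "horo E v0 (k v0) (bd_act k \<omega>p) = 0" using ka(2) horo_base[OF bk] by simp
  also have "horo E v0 (n (L j)) \<omega>p = horo E v0 (L j) \<omega>p + horo E v0 (n v0) \<omega>p"
    using horo_cocycle[OF na(1) bp, where x="L j" and o'=v0] na(2) by simp
  also have "horo E v0 (n v0) \<omega>p = 0"
    using horo_cocycle[OF na(1) bp, where x=z and o'=v0] na(2) z by simp
  finally show ?thesis using horo_L by simp
qed

lemma H_ex:
  assumes g: "g \<in> aut E"
  shows "\<exists>k nn. k \<in> stab E v0 \<and> nn \<in> horo_stab E \<omega>p \<and>
           g = k \<circ> nn \<circ> zpow \<tau> (horo E v0 (g v0) (bd_act g \<omega>p))"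
proof -
  let ?Lp = "\<lambda>n. L (int n)"
  define gp where "gp = bd_act g \<omega>p"
  have gpb: "gp \<in> boundary E" using bd_act_bnd[OF g bp L(3)] gp_def by blast
  define \<rho> where "\<rho> = geo_ray v0 gp"
  have \<rho>: "\<rho> \<in> gp" "\<rho> 0 = v0" using geo_ray[OF gpb] \<rho>_def by auto
  obtain k where k: "k \<in> stab E v0" "\<forall>t. k (L (int t)) = \<rho> t"
    using ext_aut[of ?Lp \<rho> v0] ray_Lp[of 0] bnd_ray[OF gpb \<rho>(1)] \<rho>(2) L(2) by auto
  have ka: "k \<in> aut E" "k v0 = v0" using k(1) unfolding stab_def by auto
  have kL: "k \<circ> ?Lp = \<rho>" using k(2) by auto
  have bk: "bd_act k \<omega>p = gp"
    using bd_act_bnd[OF ka(1) bp L(3)] bnd_eq[OF _ gpb _ \<rho>(1)] kL by metis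
  define h where "h = inv k \<circ> g"
  have ha: "h \<in> aut E" unfolding h_def using aut_comp aut_inv ka(1) g by blast
  have bh: "bd_act h \<omega>p = \<omega>p" unfolding h_def using bd_comp bd_inv[OF ka(1)] bk gp_def by metis
  have gkh: "g = k \<circ> h" unfolding h_def using aut_f_inv[OF ka(1)] by (simp add: fun_eq_iff)
  have "h \<circ> ?Lp \<in> \<omega>p" using bd_act_bnd[OF ha bp L(3)] bh by simp
  hence "ray_equiv ?Lp (h \<circ> ?Lp)" using bnd_equiv[OF bp L(3)] by blast
  then obtain a c where ac: "\<forall>n. L (int (n + a)) = h (L (int (n + c)))" unfolding ray_equiv_def by auto
  define j where "j = horo E v0 (g v0) gp"
  have bkb: "bd_act k \<omega>p \<in> boundary E" using bk gpb by simp
  have "j = horo E v0 (h v0) \<omega>p + horo E v0 (k v0) (bd_act k \<omega>p)"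
    unfolding j_def using horo_cocycle[OF ka(1) bp, where x="h v0" and o'=v0] gkh bk by simp
  also have "horo E v0 (k v0) (bd_act k \<omega>p) = 0" using ka(2) horo_base[OF bkb] by simp
  finally have j1: "j = horo E v0 (h v0) \<omega>p" by simp
  obtain N where N: "\<forall>n\<ge>N. horo E v0 (h v0) \<omega>p = int (d v0 (L (int n))) - int (d (h v0) (L (int n)))"
    using horo_lim[OF bp L(3)] by blast
  have "horo E v0 (h v0) \<omega>p = int (d v0 (L (int (N + a)))) - int (d (h v0) (L (int (N + a))))"
    by (meson N le_add1)
  also have "d (h v0) (L (int (N + a))) = N + c"
    using ac[rule_format, of N] aut_d[OF ha] dL[of 0 "N + c"] L(2) by simp
  also have "d v0 (L (int (N + a))) = N + a" using dL[of 0 "N + a"] L(2) by simp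
  finally have ja: "j = int a - int c" using j1 by simp
  define nn where "nn = inv k \<circ> g \<circ> zpow \<tau> (- j)"
  have nna: "nn \<in> aut E" unfolding nn_def using aut_comp aut_inv ka(1) g zpow_aut by blast
  have "bd_act nn \<omega>p = \<omega>p"
    unfolding nn_def using bd_comp bd_zpow bd_inv[OF ka(1)] bk gp_def by metis
  moreover have "nn (L (int a)) = L (int a)"
  proof -
    have "zpow \<tau> (- j) (L (int a)) = L (int c)" using zpow_L ja by simp
    moreover have "h (L (int c)) = L (int a)" using ac[rule_format, of 0] by simp
    ultimately show ?thesis unfolding nn_def h_def by simp
  qed
  ultimately have "nn \<in> horo_stab E \<omega>p" unfolding horo_stab_def using nna by blast
  moreover have gk: "g = k \<circ> nn \<circ> zpow \<tau> j"
    unfolding nn_def using zpow_cancel[OF tau_bij] aut_f_inv[OF ka(1)]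
    by (simp add: fun_eq_iff)
  have jj: "j = horo E v0 (g v0) (bd_act g \<omega>p)" unfolding j_def gp_def ..
  have "g = k \<circ> nn \<circ> zpow \<tau> (horo E v0 (g v0) (bd_act g \<omega>p))" unfolding jj[symmetric] by (rule gk)
  ultimately show ?thesis using k(1) by blast
qed

lemma H_eq: "g \<in> aut E \<Longrightarrow> Hfun E v0 \<omega>p \<tau> g = horo E v0 (g v0) (bd_act g \<omega>p)"
proof -
  assume g: "g \<in> aut E"
  show ?thesis unfolding Hfun_def
  proof (rule the_equality)
    show "\<exists>k n. k \<in> stab E v0 \<and> n \<in> horo_stab E \<omega>p \<and> g = k \<circ> n \<circ> zpow \<tau> (horo E v0 (g v0) (bd_act g \<omega>p))"
      using H_ex[OF g] by blast
  next
    fix j assume "\<exists>k n. k \<in> stab E v0 \<and> n \<in> horo_stab E \<omega>p \<and> g = k \<circ> n \<circ> zpow \<tau> j"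
    then show "j = horo E v0 (g v0) (bd_act g \<omega>p)" using H_uniq by blast
  qed
qed

end


context TM begin

lemma rv0: "r v0 = v0" using r(1) unfolding stab_def by simp

lemma main:
  "\<forall>g \<in> aut E. \<forall>g' \<in> aut E.
     (horo E v0 (g v0) (bd_act g \<omega>m) = Hfun E v0 \<omega>p \<tau> (g \<circ> r) \<and>
      Hfun E v0 \<omega>p \<tau> (g \<circ> r) = - horo E v0 (inv g v0) \<omega>m) \<and>
     Hfun E v0 \<omega>p \<tau> (g' \<circ> g) = Hfun E v0 \<omega>p \<tau> g + horo E v0 (g' v0) (bd_act (g' \<circ> g) \<omega>p) \<and>
     Hfun E v0 \<omega>p \<tau> (g' \<circ> g \<circ> r) = Hfun E v0 \<omega>p \<tau> (g \<circ> r) + horo E v0 (g' v0) (bd_act (g' \<circ> g) \<omega>m)"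
proof (intro ballI)
  fix g g' assume g: "g \<in> aut E" and g': "g' \<in> aut E"
  have gr: "g \<circ> r \<in> aut E" using aut_comp[OF g r_aut] .
  have g'g: "g' \<circ> g \<in> aut E" using aut_comp[OF g' g] .
  have g'gr: "g' \<circ> g \<circ> r \<in> aut E" using aut_comp[OF g'g r_aut] .
  have bgm: "bd_act g \<omega>m \<in> boundary E" using bd_act_bnd[OF g bm L(4)] by blast
  have bgp: "bd_act g \<omega>p \<in> boundary E" using bd_act_bnd[OF g bp L(3)] by blast
  have H1: "Hfun E v0 \<omega>p \<tau> (g \<circ> r) = horo E v0 (g v0) (bd_act g \<omega>m)"
    using H_eq[OF gr] rv0 bd_comp[of g r \<omega>p] bd_r by simp
  have "horo E v0 (inv g (g v0)) (bd_act (inv g) (bd_act g \<omega>m)) =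
        horo E v0 (g v0) (bd_act g \<omega>m) + horo E v0 (inv g v0) (bd_act (inv g) (bd_act g \<omega>m))"
    by (rule horo_cocycle[OF aut_inv[OF g] bgm, where x="g v0" and o'=v0])
  hence H2: "horo E v0 (g v0) (bd_act g \<omega>m) = - horo E v0 (inv g v0) \<omega>m"
    using bd_inv[OF g] aut_inv_f[OF g] horo_base[OF bm] by simp
  have "horo E v0 (g' (g v0)) (bd_act g' (bd_act g \<omega>p)) =
        horo E v0 (g v0) (bd_act g \<omega>p) + horo E v0 (g' v0) (bd_act g' (bd_act g \<omega>p))"
    by (rule horo_cocycle[OF g' bgp, where x="g v0" and o'=v0])
  hence H3: "Hfun E v0 \<omega>p \<tau> (g' \<circ> g) = Hfun E v0 \<omega>p \<tau> g + horo E v0 (g' v0) (bd_act (g' \<circ> g) \<omega>p)"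
    using H_eq[OF g'g] H_eq[OF g] bd_comp[of g' g \<omega>p] by simp
  have "horo E v0 (g' (g v0)) (bd_act g' (bd_act g \<omega>m)) =
        horo E v0 (g v0) (bd_act g \<omega>m) + horo E v0 (g' v0) (bd_act g' (bd_act g \<omega>m))"
    by (rule horo_cocycle[OF g' bgm, where x="g v0" and o'=v0])
  moreover have "Hfun E v0 \<omega>p \<tau> (g' \<circ> g \<circ> r) = horo E v0 (g' (g v0)) (bd_act g' (bd_act g \<omega>m))"
    using H_eq[OF g'gr] rv0 bd_comp[of "g' \<circ> g" r \<omega>p] bd_comp[of g' g \<omega>m] bd_r by simp
  ultimately have H4: "Hfun E v0 \<omega>p \<tau> (g' \<circ> g \<circ> r) = Hfun E v0 \<omega>p \<tau> (g \<circ> r) + horo E v0 (g' v0) (bd_act (g' \<circ> g) \<omega>m)"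
    using H1 bd_comp[of g' g \<omega>m] by simp
  show "(horo E v0 (g v0) (bd_act g \<omega>m) = Hfun E v0 \<omega>p \<tau> (g \<circ> r) \<and>
      Hfun E v0 \<omega>p \<tau> (g \<circ> r) = - horo E v0 (inv g v0) \<omega>m) \<and>
     Hfun E v0 \<omega>p \<tau> (g' \<circ> g) = Hfun E v0 \<omega>p \<tau> g + horo E v0 (g' v0) (bd_act (g' \<circ> g) \<omega>p) \<and>
     Hfun E v0 \<omega>p \<tau> (g' \<circ> g \<circ> r) = Hfun E v0 \<omega>p \<tau> (g \<circ> r) + horo E v0 (g' v0) (bd_act (g' \<circ> g) \<omega>m)"
    using H1 H2 H3 H4 by simp
qed

end

theorem lemma2p3:
  fixes E :: "'v \<Rightarrow> 'v \<Rightarrow> bool" and q :: nat and v0 :: 'v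
    and \<omega>m \<omega>p :: "(nat \<Rightarrow> 'v) set" and L :: "int \<Rightarrow> 'v"
    and \<tau> r :: "'v \<Rightarrow> 'v"
  assumes tree: "regular_tree E q" and q2: "q \<ge> 2"
    and bm: "\<omega>m \<in> boundary E" and bp: "\<omega>p \<in> boundary E" and ne: "\<omega>m \<noteq> \<omega>p"
    and L: "line E L" "L 0 = v0" "(\<lambda>n. L (int n)) \<in> \<omega>p" "(\<lambda>n. L (- int n)) \<in> \<omega>m"
    and tau: "\<tau> \<in> aut E" "bd_act \<tau> \<omega>p = \<omega>p" "bd_act \<tau> \<omega>m = \<omega>m"
      "\<forall>i. \<tau> (L i) = L (i + 1)"
    and r: "r \<in> stab E v0" "r \<circ> r = id" "\<forall>j. r \<circ> zpow \<tau> j \<circ> inv r = zpow \<tau> (- j)"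
  shows "\<forall>g \<in> aut E. \<forall>g' \<in> aut E.
     (horo E v0 (g v0) (bd_act g \<omega>m) = Hfun E v0 \<omega>p \<tau> (g \<circ> r) \<and>
      Hfun E v0 \<omega>p \<tau> (g \<circ> r) = - horo E v0 (inv g v0) \<omega>m) \<and>
     Hfun E v0 \<omega>p \<tau> (g' \<circ> g) = Hfun E v0 \<omega>p \<tau> g + horo E v0 (g' v0) (bd_act (g' \<circ> g) \<omega>p) \<and>
     Hfun E v0 \<omega>p \<tau> (g' \<circ> g \<circ> r) = Hfun E v0 \<omega>p \<tau> (g \<circ> r) + horo E v0 (g' v0) (bd_act (g' \<circ> g) \<omega>m)"
proof -
  interpret X: TM E q v0 \<omega>m \<omega>p L \<tau> r
    by unfold_locales (use tree bm bp L tau r in auto)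
  show ?thesis by (rule X.main)
qed


end
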